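(* Let $i\ge 1$ be an integer, let $\alpha,\beta$ be real numbers with $i-1<\alpha<i$ and $i-1<\beta<i$, let $0\le\mu\le 1$, let $m\ge 0$ with $m+\mu(\alpha-\beta)\ge 0$, and let $\lambda\in\mathbb{C}$. Consider the equation \[ D_{0y}^{(\alpha,\beta)\mu}u(y)=\lambda y^{m}u(y),\qquad y>0. \] Put $\gamma=\beta+\mu(\alpha-\beta)$ (so $\gamma>0$), $a=m+\alpha\mu+\beta(1-\mu)$, and for $s=0,1,\dots,i-1$ put $b_s=s-(1-\mu)(i-\beta)$. Then the $i$ functions \[ u_s(y)=y^{b_s}\,E_{\gamma,\frac{a}{\gamma},\frac{a+b_s}{\gamma}-1}\bigl(\lambda y^{a}\bigr),\qquad s=0,1,\dots,i-1, \] that is, \[ u_s(y)=y^{s-(1-\mu)(i-\beta)}\sum_{k=0}^{\infty}c_k^{(s)}\bigl(\lambda y^{m+\alpha\mu+\beta(1-\mu)}\bigr)^k,\quad c_0^{(s)}=1,\quad c_k^{(s)}=\prod_{j=0}^{k-1}\frac{\Gamma\bigl(a(j+1)+b_s-\gamma+1\bigr)}{\Gamma\bigl(a(j+1)+b_s+1\bigr)}\ (k\ge1), \] are linearly independent solutions of this equation on $y>0$.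
   Context: For $\nu>0$, $I_{0y}^{\nu}g(y)=\frac{1}{\Gamma(\nu)}\int_0^y \frac{g(t)\,dt}{(y-t)^{1-\nu}}$ is the Riemann–Liouville fractional integral. The generalized Hilfer derivative is defined by \[ D_{0y}^{(\alpha,\beta)\mu}=I_{0y}^{\mu(i-\alpha)}\frac{d^{i}}{dy^{i}}I_{0y}^{(1-\mu)(i-\beta)}, \] where $i-1<\alpha,\beta<i$ and $0\le\mu\le1$ (with $I^0$ the identity). The Kilbas–Saigo function is \[ E_{\rho,n,l}(z)=\sum_{k=0}^{\infty}c_k z^k,\quad c_0=1,\quad c_k=\prod_{j=0}^{k-1}\frac{\Gamma(\rho(jn+l)+1)}{\Gamma(\rho(jn+l+1)+1)},\ k\ge1. \] *)

theory Defs
  imports "HOL-Analysis.Analysis"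
begin

definition frac_int :: "real \<Rightarrow> (real \<Rightarrow> complex) \<Rightarrow> real \<Rightarrow> complex" where
  "frac_int \<nu> g y =
     (if \<nu> = 0 then g y
      else integral {0..y} (\<lambda>t. complex_of_real ((y - t) powr (\<nu> - 1)) * g t)
             / complex_of_real (Gamma \<nu>))"

definition frac_int_exists :: "real \<Rightarrow> (real \<Rightarrow> complex) \<Rightarrow> real \<Rightarrow> bool" where
  "frac_int_exists \<nu> g y \<longleftrightarrow>
     (\<nu> = 0 \<or> (\<lambda>t. complex_of_real ((y - t) powr (\<nu> - 1)) * g t) integrable_on {0..y})"

fun hderiv :: "nat \<Rightarrow> (real \<Rightarrow> complex) \<Rightarrow> real \<Rightarrow> complex" where
  "hderiv 0 f = f"
| "hderiv (Suc n) f = (\<lambda>x. vector_derivative (hderiv n f) (at x))"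

text \<open>u solves  D_{0y}^{(alpha,beta)mu} u(y) = lambda y^m u(y)  for y > 0, where
  D = I^{mu(i-alpha)} d^i/dy^i I^{(1-mu)(i-beta)}; all integrals and derivatives are
  required to exist.\<close>
definition hilfer_solution ::
  "nat \<Rightarrow> real \<Rightarrow> real \<Rightarrow> real \<Rightarrow> real \<Rightarrow> complex \<Rightarrow> (real \<Rightarrow> complex) \<Rightarrow> bool" where
  "hilfer_solution i \<alpha> \<beta> \<mu> m lam u \<longleftrightarrow>
     (let p = (1 - \<mu>) * (real i - \<beta>); q = \<mu> * (real i - \<alpha>); v = frac_int p u in
       (\<forall>y>0. frac_int_exists p u y) \<and>
       (\<forall>k<i. \<forall>y>0. (hderiv k v has_vector_derivative hderiv (Suc k) v y) (at y)) \<and>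
       (\<forall>y>0. frac_int_exists q (hderiv i v) y) \<and>
       (\<forall>y>0. frac_int q (hderiv i v) y = lam * complex_of_real (y powr m) * u y))"

definition ks_coeff :: "real \<Rightarrow> real \<Rightarrow> real \<Rightarrow> nat \<Rightarrow> real" where
  "ks_coeff \<rho> n l k =
     (\<Prod>j<k. Gamma (\<rho> * (real j * n + l) + 1) / Gamma (\<rho> * (real j * n + l + 1) + 1))"

definition kilbas_saigo :: "real \<Rightarrow> real \<Rightarrow> real \<Rightarrow> complex \<Rightarrow> complex" where
  "kilbas_saigo \<rho> n l z = (\<Sum>k. complex_of_real (ks_coeff \<rho> n l k) * z ^ k)"

definition hilfer_u ::
  "nat \<Rightarrow> real \<Rightarrow> real \<Rightarrow> real \<Rightarrow> real \<Rightarrow> complex \<Rightarrow> nat \<Rightarrow> real \<Rightarrow> complex" where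
  "hilfer_u i \<alpha> \<beta> \<mu> m lam s y =
     (let \<gamma> = \<beta> + \<mu> * (\<alpha> - \<beta>);
          a = m + \<alpha> * \<mu> + \<beta> * (1 - \<mu>);
          b = real s - (1 - \<mu>) * (real i - \<beta>)
      in complex_of_real (y powr b) *
         kilbas_saigo \<gamma> (a / \<gamma>) ((a + b) / \<gamma> - 1) (lam * complex_of_real (y powr a)))"

end

theory Submission
  imports Defs
begin


definition ent :: "(nat \<Rightarrow> complex) \<Rightarrow> bool" where
  "ent d \<longleftrightarrow> (\<forall>r::real. summable (\<lambda>k. norm (d k) * r ^ k))"

definition PS :: "(nat \<Rightarrow> complex) \<Rightarrow> complex \<Rightarrow> complex" where
  "PS d z = (\<Sum>k. d k * z ^ k)"

definition FP :: "real \<Rightarrow> (nat \<Rightarrow> complex) \<Rightarrow> real \<Rightarrow> real \<Rightarrow> complex" where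
  "FP a d e y = of_real (y powr e) * PS d (of_real (y powr a))"

lemma ent_summable: "ent d \<Longrightarrow> summable (\<lambda>k. d k * z ^ k)"
  unfolding ent_def
  by (rule summable_norm_cancel) (simp add: norm_mult norm_power)

lemma ent_summable_norm: "ent d \<Longrightarrow> summable (\<lambda>k. norm (d k) * r ^ k)"
  unfolding ent_def by blast

lemma ent_sums: "ent d \<Longrightarrow> (\<lambda>k. d k * z ^ k) sums PS d z"
  unfolding PS_def using ent_summable summable_sums by blast

lemma ent_bound:
  assumes "ent d" and "\<And>k. norm (d' k) \<le> (A + B * real k) * norm (d k)"
  shows "ent d'"
  unfolding ent_def
proof
  fix r :: real
  have s: "summable (\<lambda>k. (\<bar>A\<bar> + \<bar>B\<bar>) * (norm (d k) * (2 * \<bar>r\<bar>) ^ k))"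
    using ent_summable_norm[OF assms(1)] by (intro summable_mult)
  show "summable (\<lambda>k. norm (d' k) * r ^ k)"
  proof (rule summable_comparison_test[OF _ s], intro exI allI impI)
    fix k :: nat
    have k2: "real k \<le> 2 ^ k" 
      using less_exp[of k] by (metis of_nat_less_iff of_nat_numeral of_nat_power less_imp_le)
    have "A + B * real k \<le> \<bar>A\<bar> + \<bar>B\<bar> * 2 ^ k"
    proof -
      have "B * real k \<le> \<bar>B\<bar> * real k" by (intro mult_right_mono) auto
      also have "\<dots> \<le> \<bar>B\<bar> * 2 ^ k" using k2 by (intro mult_left_mono) auto
      finally show ?thesis by linarith
    qed
    also have "\<dots> \<le> (\<bar>A\<bar> + \<bar>B\<bar>) * 2 ^ k"
    proof -
      have "\<bar>A\<bar> * 1 \<le> \<bar>A\<bar> * 2 ^ k" by (intro mult_left_mono) auto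
      thus ?thesis by (simp add: distrib_right)
    qed
    finally have 1: "A + B * real k \<le> (\<bar>A\<bar> + \<bar>B\<bar>) * 2 ^ k" .
    have "norm (norm (d' k) * r ^ k) = norm (d' k) * \<bar>r\<bar> ^ k" by (simp add: abs_mult power_abs)
    also have "\<dots> \<le> ((A + B * real k) * norm (d k)) * \<bar>r\<bar> ^ k"
      using assms(2) by (intro mult_right_mono) auto
    also have "\<dots> \<le> (((\<bar>A\<bar> + \<bar>B\<bar>) * 2 ^ k) * norm (d k)) * \<bar>r\<bar> ^ k"
      using 1 by (intro mult_right_mono) auto
    also have "\<dots> = (\<bar>A\<bar> + \<bar>B\<bar>) * (norm (d k) * (2 * \<bar>r\<bar>) ^ k)"
      by (simp add: power_mult_distrib)
    finally show "norm (norm (d' k) * r ^ k) \<le> (\<bar>A\<bar> + \<bar>B\<bar>) * (norm (d k) * (2 * \<bar>r\<bar>) ^ k)" .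
  qed
qed

lemma ent_shift:
  assumes "ent d" shows "ent (\<lambda>k. d (Suc k))"
  unfolding ent_def
proof
  fix r :: real
  define R where "R = max 1 \<bar>r\<bar>"
  have "summable (\<lambda>k. norm (d (Suc k)) * R ^ (Suc k))"
    using summable_ignore_initial_segment[OF ent_summable_norm[OF assms, of R], of 1] by simp
  then show "summable (\<lambda>k. norm (d (Suc k)) * r ^ k)"
  proof (rule summable_comparison_test[rotated], intro exI allI impI)
    fix k
    have "\<bar>r\<bar> ^ k \<le> R ^ k" unfolding R_def by (intro power_mono) auto
    also have "\<dots> \<le> R ^ Suc k" unfolding R_def by (intro power_increasing) auto
    finally show "norm (norm (d (Suc k)) * r ^ k) \<le> norm (d (Suc k)) * R ^ Suc k"
      by (simp add: abs_mult power_abs mult_left_mono)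
  qed
qed

lemma ent_deriv_coeff:
  assumes "ent d" "a > 0" shows "ent (\<lambda>k. d k * of_real (e + real k * a))"
proof (rule ent_bound[OF assms(1), of _ "\<bar>e\<bar>" a])
  fix k
  have "norm (of_real (e + real k * a) :: complex) = \<bar>e + real k * a\<bar>" by (simp only: norm_of_real)
  also have "\<dots> \<le> \<bar>e\<bar> + a * real k" using assms(2) by (simp add: abs_triangle_ineq order.trans[OF abs_triangle_ineq] abs_mult mult.commute)
  finally show "norm (d k * of_real (e + real k * a)) \<le> (\<bar>e\<bar> + a * real k) * norm (d k)"
    by (simp add: norm_mult mult.commute mult_left_mono del: of_real_add of_real_mult)
qed

lemma FP_deriv:
  assumes "a > 0" "ent d" "y > 0"
  shows "(FP a d e has_vector_derivative FP a (\<lambda>k. d k * of_real (e + real k * a)) (e - 1) y) (at y)"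
proof -
  define w where "w = (of_real (y powr a) :: complex)"
  define S' where "S' = (\<Sum>k. diffs d k * w ^ k)"
  have D1: "((\<lambda>y. of_real (y powr e) :: complex) has_vector_derivative of_real (e * y powr (e-1))) (at y)"
    by (rule has_vector_derivative_of_real, rule has_real_derivative_powr) (use assms in auto)
  have D2: "((\<lambda>y. of_real (y powr a) :: complex) has_vector_derivative of_real (a * y powr (a-1))) (at y)"
    by (rule has_vector_derivative_of_real, rule has_real_derivative_powr) (use assms in auto)
  have D3: "(PS d has_field_derivative S') (at w)"
    unfolding PS_def[abs_def] S'_def
    by (rule termdiffs_strong_converges_everywhere, rule ent_summable[OF assms(2)])
  have D4: "((\<lambda>y. PS d (of_real (y powr a))) has_vector_derivative (of_real (a * y powr (a-1)) * S')) (at y)"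
    using field_vector_diff_chain_at[OF D2, of "PS d" S'] D3 by (simp add: o_def w_def)
  have D5: "(FP a d e has_vector_derivative
      (of_real (y powr e) * (of_real (a * y powr (a-1)) * S') + of_real (e * y powr (e-1)) * PS d w)) (at y)"
    unfolding FP_def[abs_def] using has_vector_derivative_mult[OF D1 D4] by (simp add: w_def)
  have s1: "(\<lambda>k. d k * w ^ k) sums PS d w" by (rule ent_sums[OF assms(2)])
  have s2: "(\<lambda>k. diffs d k * w ^ k) sums S'"
    unfolding S'_def by (rule summable_sums, rule termdiff_converges_all, rule ent_summable[OF assms(2)])
  have "(\<lambda>k. diffs d k * w ^ k * w) sums (S' * w)" by (rule sums_mult2[OF s2])
  hence "(\<lambda>k. (\<lambda>k. of_nat k * d k * w ^ k) (Suc k)) sums (S' * w)"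
    by (simp add: diffs_def mult_ac)
  hence s3: "(\<lambda>k. of_nat k * d k * w ^ k) sums (S' * w)"
    by (subst (asm) sums_Suc_iff) simp
  have "(\<lambda>k. of_real e * (d k * w ^ k) + of_real a * (of_nat k * d k * w ^ k)) sums
          (of_real e * PS d w + of_real a * (S' * w))"
    by (intro sums_add sums_mult s1 s3)
  hence "(\<lambda>k. d k * of_real (e + real k * a) * w ^ k) sums (of_real e * PS d w + of_real a * (S' * w))"
    by (simp add: algebra_simps)
  hence P: "PS (\<lambda>k. d k * of_real (e + real k * a)) w = of_real e * PS d w + of_real a * (S' * w)"
    unfolding PS_def by (simp add: sums_iff)
  have pw: "y powr e * y powr (a-1) = y powr (e-1) * y powr a"
  proof -
    have "e + (a - 1) = (e - 1) + a" by simp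
    then show ?thesis by (metis powr_add)
  qed
  have pw2: "(of_real (y powr e) :: complex) * of_real (y powr (a-1)) = of_real (y powr (e-1)) * w"
    unfolding w_def by (simp flip: of_real_mult add: pw)
  have "of_real (y powr e) * (of_real (a * y powr (a-1)) * S') + of_real (e * y powr (e-1)) * PS d w
      = FP a (\<lambda>k. d k * of_real (e + real k * a)) (e - 1) y"
    unfolding FP_def P w_def[symmetric]
    using pw2 by (simp add: algebra_simps)
  with D5 show ?thesis by simp
qed

lemma FP_deriv_step:
  assumes "a > 0" "ent D" "\<forall>y>0. g y = FP a D E y" "y > 0"
  shows "(g has_vector_derivative FP a (\<lambda>k. D k * of_real (E + real k * a)) (E - 1) y) (at y)"
    "vector_derivative g (at y) = FP a (\<lambda>k. D k * of_real (E + real k * a)) (E - 1) y"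
proof -
  show *: "(g has_vector_derivative FP a (\<lambda>k. D k * of_real (E + real k * a)) (E - 1) y) (at y)"
    by (rule has_vector_derivative_transform_within_open[OF FP_deriv[OF assms(1,2,4)], of "{0<..}"])
       (use assms in auto)
  show "vector_derivative g (at y) = FP a (\<lambda>k. D k * of_real (E + real k * a)) (E - 1) y"
    by (rule vector_derivative_at[OF *])
qed

definition dj :: "real \<Rightarrow> (nat \<Rightarrow> complex) \<Rightarrow> real \<Rightarrow> nat \<Rightarrow> nat \<Rightarrow> complex" where
  "dj a d e j k = d k * of_real (\<Prod>l<j. (e + real k * a - real l))"

lemma dj_Suc: "dj a d e (Suc j) k = dj a d e j k * of_real ((e - real j) + real k * a)"
  unfolding dj_def by (simp add: algebra_simps)

lemma hderiv_FP:
  assumes "a > 0" "ent d" "\<forall>y>0. f y = FP a d e y"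
  shows "ent (dj a d e j) \<and> (\<forall>y>0. hderiv j f y = FP a (dj a d e j) (e - real j) y)"
proof (induction j)
  case 0
  have "dj a d e 0 = d" unfolding dj_def by auto
  then show ?case using assms by auto
next
  case (Suc j)
  have ent: "ent (dj a d e (Suc j))"
    using ent_deriv_coeff[OF conjunct1[OF Suc] assms(1), of "e - real j"] 
    by (simp add: dj_Suc[abs_def])
  have "hderiv (Suc j) f y = FP a (dj a d e (Suc j)) (e - real (Suc j)) y" if "y > 0" for y
  proof -
    have "hderiv (Suc j) f y = vector_derivative (hderiv j f) (at y)" by simp
    also have "\<dots> = FP a (\<lambda>k. dj a d e j k * of_real ((e - real j) + real k * a)) ((e - real j) - 1) y"
      by (rule FP_deriv_step(2)[OF assms(1) conjunct1[OF Suc] conjunct2[OF Suc] that])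
    also have "\<dots> = FP a (dj a d e (Suc j)) (e - real (Suc j)) y"
      by (simp add: dj_Suc[abs_def] algebra_simps)
    finally show ?thesis .
  qed
  with ent show ?case by blast
qed

lemma hderiv_FP_deriv:
  assumes "a > 0" "ent d" "\<forall>y>0. f y = FP a d e y" "y > 0"
  shows "(hderiv j f has_vector_derivative hderiv (Suc j) f y) (at y)"
proof -
  note h = hderiv_FP[OF assms(1-3), of j]
  have "(hderiv j f has_vector_derivative FP a (\<lambda>k. dj a d e j k * of_real ((e - real j) + real k * a)) ((e - real j) - 1) y) (at y)"
    by (rule FP_deriv_step(1)[OF assms(1) conjunct1[OF h] conjunct2[OF h] assms(4)])
  moreover have "hderiv (Suc j) f y = FP a (\<lambda>k. dj a d e j k * of_real ((e - real j) + real k * a)) ((e - real j) - 1) y"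
    using vector_derivative_at[OF calculation] by simp
  ultimately show ?thesis by simp
qed

lemma FP_shift:
  assumes "ent d" "d 0 = 0" "y > 0"
  shows "FP a d e y = FP a (\<lambda>k. d (Suc k)) (e + a) y"
proof -
  define w where "w = (of_real (y powr a) :: complex)"
  have "(\<lambda>k. d (Suc k) * w ^ k * w) sums (PS (\<lambda>k. d (Suc k)) w * w)"
    by (rule sums_mult2, rule ent_sums[OF ent_shift[OF assms(1)]])
  hence "(\<lambda>k. (\<lambda>k. d k * w ^ k) (Suc k)) sums (PS (\<lambda>k. d (Suc k)) w * w)"
    by (simp add: mult_ac)
  hence "(\<lambda>k. d k * w ^ k) sums (PS (\<lambda>k. d (Suc k)) w * w)"
    by (subst (asm) sums_Suc_iff) (simp add: assms(2))
  hence P: "PS d w = PS (\<lambda>k. d (Suc k)) w * w"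
    using ent_sums[OF assms(1), of w] sums_unique2 by blast
  have "y powr (e + a) = y powr e * y powr a" by (simp add: powr_add)
  then show ?thesis unfolding FP_def w_def[symmetric] P
    by (simp add: w_def mult_ac)
qed

lemma beta_int:
  fixes c \<nu> y :: real
  assumes "c > -1" "\<nu> > 0" "y > 0"
  shows "((\<lambda>t. (y - t) powr (\<nu> - 1) * t powr c) has_integral y powr (c + \<nu>) * Beta (c + 1) \<nu>) {0..y}"
proof -
  have B: "((\<lambda>t. t powr c * (1 - t) powr (\<nu> - 1)) has_integral Beta (c + 1) \<nu>) (cbox 0 1)"
    using has_integral_Beta_real[of "c + 1" \<nu>] assms by simp
  have yi: "1 / y > 0" using assms by simp
  from has_integral_affinity'[OF B yi, of 0]
  have "((\<lambda>x. (x / y) powr c * (1 - x / y) powr (\<nu> - 1)) has_integral Beta (c + 1) \<nu> * y) {0..y}"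
    using assms by (simp add: cbox_interval divide_inverse mult.commute)
  hence I: "((\<lambda>x. y powr (c + \<nu> - 1) * ((x / y) powr c * (1 - x / y) powr (\<nu> - 1))) has_integral
        y powr (c + \<nu> - 1) * (Beta (c + 1) \<nu> * y)) {0..y}"
    by (rule has_integral_mult_right)
  have eq: "y powr (c + \<nu> - 1) * ((x / y) powr c * (1 - x / y) powr (\<nu> - 1)) = (y - x) powr (\<nu> - 1) * x powr c"
    if "x \<in> {0..y}" for x
  proof -
    have "1 - x / y = (y - x) / y" using assms by (simp add: field_simps)
    hence "(x / y) powr c * (1 - x / y) powr (\<nu> - 1) = x powr c * (y - x) powr (\<nu> - 1) / (y powr c * y powr (\<nu> - 1))"
      using that assms by (simp add: powr_divide)
    also have "y powr c * y powr (\<nu> - 1) = y powr (c + \<nu> - 1)" by (simp add: powr_add[symmetric] algebra_simps)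
    finally show ?thesis using assms by simp
  qed
  have val: "y powr (c + \<nu> - 1) * (Beta (c + 1) \<nu> * y) = y powr (c + \<nu>) * Beta (c + 1) \<nu>"
  proof -
    have "y powr (c + \<nu> - 1) * y = y powr (c + \<nu>)" using assms by (simp add: powr_add[symmetric] powr_diff)
    thus ?thesis by (simp add: mult_ac)
  qed
  show ?thesis using I eq val has_integral_spike_eq[OF negligible_empty, of "{0..y}"] by (metis (no_types, lifting) Diff_empty)
qed

lemma powr_split:
  fixes t e a :: real
  assumes "t \<ge> 0"
  shows "t powr (e + real k * a) = t powr e * (t powr a) ^ k"
proof (cases "t = 0")
  case False
  then show ?thesis using assms by (simp add: powr_add powr_power mult.commute)
qed simp

lemma ent_beta:
  fixes e \<nu> a :: real
  assumes "ent d" "a > 0" "e > -1" "\<nu> > 0"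
  shows "ent (\<lambda>k. d k * of_real (Beta (e + real k * a + 1) \<nu>))"
proof (rule ent_bound[OF assms(1), of _ "Beta (e + 1) \<nu>" 0])
  fix k
  have "Beta (e + real k * a + 1) \<nu> \<le> Beta (e + 1) \<nu>"
    by (rule Beta_real_mono) (use assms in auto)
  moreover have "Beta (e + real k * a + 1) \<nu> \<ge> 0"
  proof -
    have p: "e + real k * a + 1 > 0" using assms mult_nonneg_nonneg[of "real k" a] by linarith
    show ?thesis
      unfolding Beta_def using assms p Gamma_real_pos[OF p] Gamma_real_pos[of "e + real k * a + 1 + \<nu>"] Gamma_real_pos[of \<nu>]
      by (intro divide_nonneg_pos mult_nonneg_nonneg) auto
  qed
  ultimately show "norm (d k * of_real (Beta (e + real k * a + 1) \<nu>)) \<le> (Beta (e + 1) \<nu> + 0 * real k) * norm (d k)"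
    by (simp add: norm_mult mult.commute mult_left_mono)
qed

lemma frac_FP_integral:
  fixes \<nu> e y a :: real
  assumes "a > 0" "ent d" "e > -1" "\<nu> > 0" "y > 0"
  shows "((\<lambda>t. of_real ((y - t) powr (\<nu> - 1)) * FP a d e t) has_integral
           FP a (\<lambda>k. d k * of_real (Beta (e + real k * a + 1) \<nu>)) (e + \<nu>) y) {0..y}"
proof -
  define d' where "d' = (\<lambda>k. d k * of_real (Beta (e + real k * a + 1) \<nu>))"
  define f where "f = (\<lambda>n t. \<Sum>k<n. d k * of_real ((y - t) powr (\<nu> - 1) * t powr (e + real k * a)))"
  define g where "g = (\<lambda>t. of_real ((y - t) powr (\<nu> - 1)) * FP a d e t)"
  define M where "M = (\<Sum>k. norm (d k) * (y powr a) ^ k)"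
  define h where "h = (\<lambda>t. M * ((y - t) powr (\<nu> - 1) * t powr e))"
  define w where "w = (of_real (y powr a) :: complex)"
  have fI: "(f n has_integral (\<Sum>k<n. d k * of_real (y powr (e + real k * a + \<nu>) * Beta (e + real k * a + 1) \<nu>))) {0..y}" for n
    unfolding f_def
  proof (rule has_integral_sum, simp, rule has_integral_mult_right, rule has_integral_of_real)
    fix k assume "k \<in> {..<n}"
    have "e + real k * a > -1" using assms mult_nonneg_nonneg[of "real k" a] by linarith
    from beta_int[OF this assms(4,5)]
    show "((\<lambda>t. (y - t) powr (\<nu> - 1) * t powr (e + real k * a)) has_integral
            y powr (e + real k * a + \<nu>) * Beta (e + real k * a + 1) \<nu>) {0..y}" .
  qed
  have fE: "f n t = of_real ((y - t) powr (\<nu> - 1) * t powr e) * (\<Sum>k<n. d k * of_real (t powr a) ^ k)"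
    if "t \<ge> 0" for n t
    unfolding f_def sum_distrib_left
  proof (intro sum.cong refl)
    fix k
    have pw: "t powr (e + real k * a) = t powr e * (t powr a) ^ k" by (rule powr_split[OF that])
    show "d k * of_real ((y - t) powr (\<nu> - 1) * t powr (e + real k * a)) =
          of_real ((y - t) powr (\<nu> - 1) * t powr e) * (d k * of_real (t powr a) ^ k)"
      unfolding pw by (simp add: mult_ac)
  qed
  have hI: "h integrable_on {0..y}"
    unfolding h_def using beta_int[OF assms(3,4,5)]
    by (intro integrable_on_mult_right) (auto simp: integrable_on_def)
  have Msum: "summable (\<lambda>k. norm (d k) * (y powr a) ^ k)" by (rule ent_summable_norm[OF assms(2)])
  have bound: "norm (f n t) \<le> h t" if "t \<in> {0..y}" for n t
  proof -
    have t: "0 \<le> t" "t \<le> y" using that by auto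
    have "norm (\<Sum>k<n. d k * of_real (t powr a) ^ k) \<le> (\<Sum>k<n. norm (d k) * (y powr a) ^ k)"
    proof (rule order.trans[OF norm_sum], rule sum_mono)
      fix k
      have "(t powr a) ^ k \<le> (y powr a) ^ k" using t assms by (intro power_mono powr_mono2) auto
      thus "norm (d k * of_real (t powr a) ^ k) \<le> norm (d k) * (y powr a) ^ k"
        by (simp add: norm_mult norm_power mult_left_mono)
    qed
    also have "\<dots> \<le> M" unfolding M_def
      by (rule sum_le_suminf[OF Msum]) auto
    finally have 1: "norm (\<Sum>k<n. d k * of_real (t powr a) ^ k) \<le> M" .
    have 2: "0 \<le> (y - t) powr (\<nu> - 1) * t powr e" by simp
    have "\<bar>(y - t) powr (\<nu> - 1) * t powr e\<bar> * norm (\<Sum>k<n. d k * of_real (t powr a) ^ k)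
          \<le> ((y - t) powr (\<nu> - 1) * t powr e) * M"
      using 1 2 by (simp add: mult_left_mono)
    then show ?thesis unfolding fE[OF t(1)] h_def norm_mult norm_of_real
      by (simp add: mult.commute)
  qed
  have conv: "(\<lambda>n. f n t) \<longlonglongrightarrow> g t" if "t \<in> {0..y}" for t
  proof -
    have t: "0 \<le> t" using that by auto
    have "(\<lambda>n. \<Sum>k<n. d k * of_real (t powr a) ^ k) \<longlonglongrightarrow> PS d (of_real (t powr a))"
      using ent_sums[OF assms(2)] unfolding sums_def by blast
    hence "(\<lambda>n. of_real ((y - t) powr (\<nu> - 1) * t powr e) * (\<Sum>k<n. d k * of_real (t powr a) ^ k))
            \<longlonglongrightarrow> of_real ((y - t) powr (\<nu> - 1) * t powr e) * PS d (of_real (t powr a))"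
      by (rule tendsto_mult_left)
    thus ?thesis unfolding fE[OF t] g_def FP_def by (simp add: mult_ac)
  qed
  note DC = dominated_convergence[of f "{0..y}" h g, OF _ hI bound conv]
  have gI: "g integrable_on {0..y}" using DC(1) fI by blast
  have lim1: "(\<lambda>n. integral {0..y} (f n)) \<longlonglongrightarrow> integral {0..y} g" using DC(2) fI by blast
  have "(\<lambda>n. integral {0..y} (f n)) = (\<lambda>n. of_real (y powr (e + \<nu>)) * (\<Sum>k<n. d' k * w ^ k))"
  proof
    fix n
    have "integral {0..y} (f n) = (\<Sum>k<n. d k * of_real (y powr (e + real k * a + \<nu>) * Beta (e + real k * a + 1) \<nu>))"
      using fI by (rule integral_unique)
    also have "\<dots> = of_real (y powr (e + \<nu>)) * (\<Sum>k<n. d' k * w ^ k)"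
      unfolding sum_distrib_left
    proof (intro sum.cong refl)
      fix k
      have "y powr (e + real k * a + \<nu>) = y powr (e + \<nu>) * (y powr a) ^ k"
        using powr_split[of y "e + \<nu>" k a] assms by (simp add: algebra_simps)
      thus "d k * of_real (y powr (e + real k * a + \<nu>) * Beta (e + real k * a + 1) \<nu>) =
            of_real (y powr (e + \<nu>)) * (d' k * w ^ k)"
        by (simp add: d'_def w_def mult_ac)
    qed
    finally show "integral {0..y} (f n) = of_real (y powr (e + \<nu>)) * (\<Sum>k<n. d' k * w ^ k)" .
  qed
  moreover have "(\<lambda>n. of_real (y powr (e + \<nu>)) * (\<Sum>k<n. d' k * w ^ k)) \<longlonglongrightarrow> FP a d' (e + \<nu>) y"
    unfolding FP_def w_def[symmetric]
    by (rule tendsto_mult_left) (use ent_sums[OF ent_beta[OF assms(2,1,3,4)], of w] in \<open>simp add: sums_def d'_def\<close>)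
  ultimately have "integral {0..y} g = FP a d' (e + \<nu>) y"
    using lim1 LIMSEQ_unique by metis
  with gI show ?thesis unfolding g_def d'_def
    by (metis has_integral_integrable_integral)
qed

lemma FP_cmult:
  assumes "ent d"
  shows "FP a (\<lambda>k. c * d k) e y = c * FP a d e y"
proof -
  have "PS (\<lambda>k. c * d k) z = c * PS d z" for z
    unfolding PS_def using suminf_mult[OF ent_summable[OF assms], of c z] by (simp add: mult_ac)
  thus ?thesis unfolding FP_def by (simp add: mult_ac)
qed

definition gcoef :: "real \<Rightarrow> (nat \<Rightarrow> complex) \<Rightarrow> real \<Rightarrow> real \<Rightarrow> nat \<Rightarrow> complex" where
  "gcoef a d e \<nu> k = d k * of_real (Gamma (e + real k * a + 1) / Gamma (e + real k * a + \<nu> + 1))"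

lemma gcoef_beta:
  assumes "a > 0" "e > -1" "\<nu> > 0"
  shows "gcoef a d e \<nu> = (\<lambda>k. of_real (1 / Gamma \<nu>) * (d k * of_real (Beta (e + real k * a + 1) \<nu>)))"
proof
  fix k
  have p: "e + real k * a + 1 > 0" using assms mult_nonneg_nonneg[of "real k" a] by linarith
  have g: "Gamma \<nu> > 0" using assms by simp
  have "Gamma (e + real k * a + 1) / Gamma (e + real k * a + \<nu> + 1) = 1 / Gamma \<nu> * Beta (e + real k * a + 1) \<nu>"
    unfolding Beta_def using g by (simp add: field_simps add_ac)
  then show "gcoef a d e \<nu> k = of_real (1 / Gamma \<nu>) * (d k * of_real (Beta (e + real k * a + 1) \<nu>))"
    unfolding gcoef_def by (simp add: mult_ac)
qed

lemma gcoef_zero: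
  assumes "a > 0" "e > -1"
  shows "gcoef a d e 0 = d"
proof
  fix k
  have p: "e + real k * a + 1 > 0" using assms mult_nonneg_nonneg[of "real k" a] by linarith
  show "gcoef a d e 0 k = d k" unfolding gcoef_def using Gamma_real_pos[OF p] by simp
qed

lemma ent_gcoef:
  assumes "a > 0" "ent d" "e > -1" "\<nu> \<ge> 0"
  shows "ent (gcoef a d e \<nu>)"
proof (cases "\<nu> = 0")
  case True
  then show ?thesis using gcoef_zero assms by simp
next
  case False
  hence nu: "\<nu> > 0" using assms by simp
  show ?thesis unfolding gcoef_beta[OF assms(1,3) nu]
    by (rule ent_bound[OF ent_beta[OF assms(2,1,3) nu], of _ "norm (of_real (1 / Gamma \<nu>) :: complex)" 0])
       (simp add: norm_mult norm_divide)
qed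

lemma frac_FP:
  assumes "a > 0" "ent d" "e > -1" "\<nu> \<ge> 0" "y > 0" "\<forall>t>0. g t = FP a d e t"
  shows "frac_int_exists \<nu> g y \<and> frac_int \<nu> g y = FP a (gcoef a d e \<nu>) (e + \<nu>) y"
proof (cases "\<nu> = 0")
  case True
  then show ?thesis using assms gcoef_zero[OF assms(1,3)] by (simp add: frac_int_def frac_int_exists_def)
next
  case False
  hence nu: "\<nu> > 0" using assms by simp
  have I: "((\<lambda>t. of_real ((y - t) powr (\<nu> - 1)) * FP a d e t) has_integral
           FP a (\<lambda>k. d k * of_real (Beta (e + real k * a + 1) \<nu>)) (e + \<nu>) y) {0..y}"
    by (rule frac_FP_integral[OF assms(1-3) nu assms(5)])
  have I2: "((\<lambda>t. of_real ((y - t) powr (\<nu> - 1)) * g t) has_integral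
           FP a (\<lambda>k. d k * of_real (Beta (e + real k * a + 1) \<nu>)) (e + \<nu>) y) {0..y}"
    by (rule has_integral_spike[OF negligible_sing[of 0] _ I]) (use assms(6) in auto)
  have "frac_int \<nu> g y = FP a (\<lambda>k. d k * of_real (Beta (e + real k * a + 1) \<nu>)) (e + \<nu>) y / of_real (Gamma \<nu>)"
    unfolding frac_int_def using False integral_unique[OF I2] by simp
  also have "\<dots> = of_real (1 / Gamma \<nu>) * FP a (\<lambda>k. d k * of_real (Beta (e + real k * a + 1) \<nu>)) (e + \<nu>) y"
    by (simp add: divide_inverse mult.commute)
  also have "\<dots> = FP a (gcoef a d e \<nu>) (e + \<nu>) y"
    unfolding gcoef_beta[OF assms(1,3) nu]
    by (rule FP_cmult[symmetric], rule ent_beta[OF assms(2,1,3) nu])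
  finally show ?thesis using I2 unfolding frac_int_exists_def by (auto simp: integrable_on_def)
qed



lemma Gamma_ratio_bound:
  fixes x g :: real
  assumes "x > 1" "g > 0"
  shows "Gamma x / Gamma (x + g) \<le> (x - 1) powr (- g)"
proof -
  define f where "f = (ln \<circ> Gamma :: real \<Rightarrow> real)"
  define t where "t = 1 / (1 + g)"
  have t: "0 \<le> t" "t \<le> 1" "0 < t" using assms by (auto simp: t_def)
  have cx: "(1 - t) *\<^sub>R (x - 1) + t *\<^sub>R (x + g) = x"
  proof -
    have "(1 - t) * (x - 1) + t * (x + g) = (x - 1) + t * (1 + g)" by (simp add: algebra_simps)
    also have "t * (1 + g) = 1" using assms by (simp add: t_def)
    finally show ?thesis by simp
  qed
  have "f ((1 - t) *\<^sub>R (x - 1) + t *\<^sub>R (x + g)) \<le> (1 - t) * f (x - 1) + t * f (x + g)"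
    unfolding f_def by (rule convex_onD[OF log_convex_Gamma_real]) (use assms t in auto)
  hence c: "f x \<le> (1 - t) * f (x - 1) + t * f (x + g)" by (simp only: cx)
  have G: "Gamma x = (x - 1) * Gamma (x - 1)"
    using Gamma_plus1[of "x - 1"] assms
    by (simp add: nonpos_Ints_def)
  hence fx: "f x = f (x - 1) + ln (x - 1)"
  proof -
    have "Gamma (x - 1) > 0" using assms by (intro Gamma_real_pos) simp
    then have "ln (Gamma x) = ln (x - 1) + ln (Gamma (x - 1))"
      unfolding G using assms by (intro ln_mult_pos) auto
    then show ?thesis unfolding f_def by simp
  qed
  have "f x + g * ln (x - 1) \<le> f (x + g)"
  proof -
    from c fx have "t * f x \<le> t * f (x + g) - (1 - t) * ln (x - 1)"
      by (simp add: algebra_simps)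
    hence "f x \<le> f (x + g) - ((1 - t) / t) * ln (x - 1)"
      using t by (simp add: field_simps)
    moreover have "(1 - t) / t = g" using assms by (simp add: t_def field_simps)
    ultimately show ?thesis by simp
  qed
  hence "ln (Gamma x) - ln (Gamma (x + g)) \<le> - g * ln (x - 1)" unfolding f_def by simp
  hence "exp (ln (Gamma x) - ln (Gamma (x + g))) \<le> exp (- g * ln (x - 1))" by simp
  moreover have "exp (ln (Gamma x) - ln (Gamma (x + g))) = Gamma x / Gamma (x + g)"
    using assms by (simp add: exp_diff)
  moreover have "exp (- g * ln (x - 1)) = (x - 1) powr (- g)"
    using assms by (simp add: powr_def)
  ultimately show ?thesis by simp
qed

lemma ent_ratio:
  fixes C R :: "nat \<Rightarrow> real" and lam :: complex
  assumes "\<And>k. C (Suc k) = C k * R k" "R \<longlonglongrightarrow> 0"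
  shows "ent (\<lambda>k. of_real (C k) * lam ^ k)"
  unfolding ent_def
proof
  fix r :: real
  define c where "c = norm lam * \<bar>r\<bar>"
  have "(\<lambda>k. R k * c) \<longlonglongrightarrow> 0" using tendsto_mult_left_zero[OF assms(2)] by simp
  from LIMSEQ_D[OF this, of "1/2"] obtain N where N: "\<And>n. n \<ge> N \<Longrightarrow> \<bar>R n * c\<bar> < 1/2" by auto
  define f where "f = (\<lambda>k. norm (of_real (C k) * lam ^ k) * r ^ k)"
  have fn: "norm (f k) = \<bar>C k\<bar> * (norm lam * \<bar>r\<bar>) ^ k" for k
    unfolding f_def by (simp add: norm_mult norm_power abs_mult power_abs power_mult_distrib)
  show "summable f"
  proof (rule summable_ratio_test[of "1/2" N])
    fix n assume "n \<ge> N"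
    hence "\<bar>R n\<bar> * c \<le> 1/2" using N[of n] by (simp add: abs_mult c_def)
    have "norm (f (Suc n)) = (\<bar>R n\<bar> * c) * norm (f n)"
      unfolding fn assms(1) c_def by (simp add: abs_mult)
    also have "\<dots> \<le> 1/2 * norm (f n)"
      by (rule mult_right_mono) (fact, simp)
    finally show "norm (f (Suc n)) \<le> 1/2 * norm (f n)" .
  qed simp
qed

lemma Gamma_ratio_lim:
  fixes A B g :: real
  assumes "A > 0" "g > 0"
  shows "(\<lambda>k. Gamma (real k * A + B) / Gamma (real k * A + B + g)) \<longlonglongrightarrow> 0"
proof (rule tendsto_sandwich[of "\<lambda>_. 0" _ _ "\<lambda>k. (real k * A + B - 1) powr (- g)"])
  have lim: "filterlim (\<lambda>k. real k * A + (B - 1)) at_top sequentially"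
  proof -
    have "filterlim (\<lambda>k. (B - 1) + real k * A) at_top sequentially"
      by (rule filterlim_tendsto_add_at_top[OF tendsto_const])
         (rule filterlim_at_top_mult_tendsto_pos[OF tendsto_const assms(1) filterlim_real_sequentially])
    then show ?thesis by (simp add: add.commute)
  qed
  hence ev: "eventually (\<lambda>k. real k * A + (B - 1) > 0) sequentially"
    by (simp add: filterlim_at_top_dense)
  show "eventually (\<lambda>k. 0 \<le> Gamma (real k * A + B) / Gamma (real k * A + B + g)) sequentially"
    using ev by eventually_elim (use assms in \<open>auto intro!: divide_nonneg_pos less_imp_le\<close>)
  show "eventually (\<lambda>k. Gamma (real k * A + B) / Gamma (real k * A + B + g) \<le> (real k * A + B - 1) powr (- g)) sequentially"
    using ev by eventually_elim (rule Gamma_ratio_bound, use assms in auto)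
  show "(\<lambda>k. (real k * A + B - 1) powr (- g)) \<longlonglongrightarrow> 0"
    using tendsto_neg_powr[of "- g", OF _ lim] assms by (simp add: algebra_simps)
qed simp

lemma Gamma_prod_shift:
  fixes x :: real
  assumes "x - real n + 1 > 0"
  shows "(\<Prod>l<n. (x - real l)) * Gamma (x - real n + 1) = Gamma (x + 1)"
  using assms
proof (induction n)
  case 0
  then show ?case by simp
next
  case (Suc n)
  have pos: "x - real n > 0" using Suc.prems by simp
  have "Gamma (x - real n + 1) = (x - real n) * Gamma (x - real n)"
    by (rule Gamma_plus1) (use pos in \<open>auto elim!: nonpos_Ints_cases\<close>)
  moreover have "x - real (Suc n) + 1 = x - real n" by simp
  ultimately have "(\<Prod>l<Suc n. (x - real l)) * Gamma (x - real (Suc n) + 1) =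
      (\<Prod>l<n. (x - real l)) * Gamma (x - real n + 1)"
    by (simp add: mult_ac)
  also have "\<dots> = Gamma (x + 1)" using Suc.IH pos by simp
  finally show ?case .
qed

definition Ccoef :: "real \<Rightarrow> real \<Rightarrow> real \<Rightarrow> nat \<Rightarrow> real" where
  "Ccoef a b g k = (\<Prod>j<k. Gamma (real j * a + a + b - g + 1) / Gamma (real j * a + a + b + 1))"

lemma ent_Ccoef:
  fixes lam :: complex
  assumes "a > 0" "g > 0"
  shows "ent (\<lambda>k. of_real (Ccoef a b g k) * lam ^ k)"
proof (rule ent_ratio)
  define B where "B = a + b - g + 1"
  show "Ccoef a b g (Suc k) = Ccoef a b g k * (Gamma (real k * a + B) / Gamma (real k * a + B + g))" for k
  proof -
    have 1: "real k * a + a + b - g + 1 = real k * a + B" unfolding B_def by simp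
    have 2: "real k * a + a + b + 1 = real k * a + B + g" unfolding B_def by simp
    show ?thesis unfolding Ccoef_def by (simp add: 1 2)
  qed
  show "(\<lambda>k. Gamma (real k * a + B) / Gamma (real k * a + B + g)) \<longlonglongrightarrow> 0"
    by (rule Gamma_ratio_lim[OF assms])
qed

lemma hilfer_u_FP:
  assumes "g = \<beta> + \<mu> * (\<alpha> - \<beta>)" "a = m + \<alpha> * \<mu> + \<beta> * (1 - \<mu>)"
    "b = real s - (1 - \<mu>) * (real i - \<beta>)" "g \<noteq> 0"
  shows "hilfer_u i \<alpha> \<beta> \<mu> m lam s = FP a (\<lambda>k. of_real (Ccoef a b g k) * lam ^ k) b"
proof
  fix y
  have ks: "ks_coeff g (a / g) ((a + b) / g - 1) k = Ccoef a b g k" for k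
    unfolding ks_coeff_def Ccoef_def
  proof (intro prod.cong refl)
    fix j
    have 1: "g * (real j * (a / g) + ((a + b) / g - 1)) + 1 = real j * a + a + b - g + 1"
      using assms(4) by (simp add: field_simps)
    have 2: "g * (real j * (a / g) + ((a + b) / g - 1) + 1) + 1 = real j * a + a + b + 1"
      using assms(4) by (simp add: field_simps)
    show "Gamma (g * (real j * (a / g) + ((a + b) / g - 1)) + 1) /
          Gamma (g * (real j * (a / g) + ((a + b) / g - 1) + 1) + 1) =
          Gamma (real j * a + a + b - g + 1) / Gamma (real j * a + a + b + 1)"
      by (simp only: 1 2)
  qed
  show "hilfer_u i \<alpha> \<beta> \<mu> m lam s y = FP a (\<lambda>k. of_real (Ccoef a b g k) * lam ^ k) b y"
    unfolding hilfer_u_def Let_def assms(1,2,3)[symmetric] FP_def PS_def kilbas_saigo_def ks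
    by (simp add: power_mult_distrib mult_ac)
qed

lemma lin_indep:
  fixes c :: "nat \<Rightarrow> complex" and D :: "nat \<Rightarrow> nat \<Rightarrow> complex"
  assumes "a > 0" "\<And>s. s < i \<Longrightarrow> ent (D s)" "\<And>s. s < i \<Longrightarrow> D s 0 = 1"
    "\<And>y. y > 0 \<Longrightarrow> (\<Sum>s<i. c s * FP a (D s) (real s - p) y) = 0"
  shows "\<forall>s<i. c s = 0"
proof (intro allI impI)
  fix s0 assume "s0 < i"
  then show "c s0 = 0"
  proof (induction s0 rule: less_induct)
    case (less s0)
    have IH: "c s = 0" if "s < s0" for s using less.IH[of s] that less.prems by simp
    define h where "h = (\<lambda>y. \<Sum>s<i. c s * (if s0 \<le> s then of_real (y ^ (s - s0)) * PS (D s) (of_real (y powr a)) else 0))"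
    have h0: "h y = 0" if "y > 0" for y
    proof -
      have "(\<Sum>s<i. c s * FP a (D s) (real s - p) y) = of_real (y powr (real s0 - p)) * h y"
        unfolding h_def sum_distrib_left
      proof (intro sum.cong refl)
        fix s
        show "c s * FP a (D s) (real s - p) y = of_real (y powr (real s0 - p)) *
            (c s * (if s0 \<le> s then of_real (y ^ (s - s0)) * PS (D s) (of_real (y powr a)) else 0))"
        proof (cases "s0 \<le> s")
          case True
          have eq: "real s - p = (real s0 - p) + real (s - s0)" using True by (simp add: of_nat_diff)
          have "y powr (real s - p) = y powr (real s0 - p) * y powr real (s - s0)"
            unfolding eq by (rule powr_add)
          also have "y powr real (s - s0) = y ^ (s - s0)" by (rule powr_realpow[OF that])
          finally have pw: "y powr (real s - p) = y powr (real s0 - p) * y ^ (s - s0)" .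
          show ?thesis using True unfolding FP_def pw by (simp add: mult_ac)
        next
          case False
          then show ?thesis using IH[of s] by simp
        qed
      qed
      hence "of_real (y powr (real s0 - p)) * h y = 0" using assms(4)[OF that] by simp
      moreover have "(of_real (y powr (real s0 - p)) :: complex) \<noteq> 0" using that by simp
      ultimately show ?thesis by simp
    qed
    have lim: "(h \<longlongrightarrow> (\<Sum>s<i. c s * (if s0 \<le> s then of_real (0 ^ (s - s0)) * PS (D s) 0 else 0))) (at_right 0)"
      unfolding h_def
    proof (rule tendsto_sum, rule tendsto_mult_left)
      fix s assume s: "s \<in> {..<i}"
      have p0: "((\<lambda>y::real. y powr a) \<longlongrightarrow> 0) (at_right 0)"
      proof -
        have ev0: "eventually (\<lambda>y::real. 0 \<le> y) (at_right 0)"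
          using eventually_at_right_less[of "0::real"] by (rule eventually_mono) simp
        show ?thesis by (rule tendsto_zero_powrI[OF tendsto_ident_at tendsto_const ev0]) (use assms(1) in simp)
      qed
      have t1: "((\<lambda>y::real. of_real (y powr a) :: complex) \<longlongrightarrow> 0) (at_right 0)"
        using tendsto_of_real[OF p0, where 'a=complex] by simp
      have c1: "isCont (PS (D s)) 0"
        unfolding PS_def[abs_def] using s assms(2) by (intro isCont_powser_converges_everywhere ent_summable) auto
      have "((\<lambda>y::real. PS (D s) (of_real (y powr a))) \<longlongrightarrow> PS (D s) 0) (at_right 0)"
        by (rule isCont_tendsto_compose[OF c1 t1])
      moreover have "((\<lambda>y::real. of_real (y ^ (s - s0)) :: complex) \<longlongrightarrow> of_real (0 ^ (s - s0))) (at_right 0)"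
        by (intro tendsto_of_real tendsto_power tendsto_ident_at)
      ultimately show "((\<lambda>y. if s0 \<le> s then of_real (y ^ (s - s0)) * PS (D s) (of_real (y powr a)) else 0) \<longlongrightarrow>
          (if s0 \<le> s then of_real (0 ^ (s - s0)) * PS (D s) 0 else 0)) (at_right 0)"
        by (cases "s0 \<le> s") (simp_all add: tendsto_mult)
    qed
    have val: "(\<Sum>s<i. c s * (if s0 \<le> s then of_real (0 ^ (s - s0)) * PS (D s) 0 else 0)) = c s0"
    proof -
      have "(\<Sum>s<i. c s * (if s0 \<le> s then of_real (0 ^ (s - s0)) * PS (D s) 0 else 0)) =
            (\<Sum>s<i. if s = s0 then c s0 else 0)"
      proof (intro sum.cong refl)
        fix s assume "s \<in> {..<i}"
        then show "c s * (if s0 \<le> s then of_real (0 ^ (s - s0)) * PS (D s) 0 else 0) = (if s = s0 then c s0 else 0)"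
        proof (cases "s0 \<le> s")
          case True
          then show ?thesis using assms(3)[of s] \<open>s \<in> {..<i}\<close> by (cases "s = s0") (auto simp: PS_def powser_zero)
        next
          case False
          then show ?thesis by auto
        qed
      qed
      also have "\<dots> = c s0" using less.prems by (simp add: sum.delta)
      finally show ?thesis .
    qed
    have "eventually (\<lambda>y. h y = 0) (at_right 0)"
      by (rule eventually_mono[OF eventually_at_right_less h0])
    note ev = this
    have "(h \<longlongrightarrow> c s0) (at_right 0)" using lim unfolding val .
    hence "((\<lambda>y. 0) \<longlongrightarrow> c s0) (at_right (0::real))"
      using tendsto_cong[OF ev] by blast
    from tendsto_unique[OF trivial_limit_at_right_real this tendsto_const]
    show "c s0 = 0" by simp
  qed
qed


lemma solution_part:
  fixes i s :: nat and \<alpha> \<beta> \<mu> m :: real and lam :: complex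
  assumes "i \<ge> 1"
    and "real i - 1 < \<alpha>" "\<alpha> < real i"
    and "real i - 1 < \<beta>" "\<beta> < real i"
    and "0 \<le> \<mu>" "\<mu> \<le> 1"
    and "0 \<le> m" "m + \<mu> * (\<alpha> - \<beta>) \<ge> 0"
    and "s < i"
  shows "hilfer_solution i \<alpha> \<beta> \<mu> m lam (hilfer_u i \<alpha> \<beta> \<mu> m lam s)"
proof -
  define p where "p = (1 - \<mu>) * (real i - \<beta>)"
  define q where "q = \<mu> * (real i - \<alpha>)"
  define g where "g = \<beta> + \<mu> * (\<alpha> - \<beta>)"
  define a where "a = m + \<alpha> * \<mu> + \<beta> * (1 - \<mu>)"
  define b where "b = real s - (1 - \<mu>) * (real i - \<beta>)"
  have p0: "0 \<le> p" unfolding p_def using assms by simp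
  have p1: "p < 1"
  proof -
    have "p \<le> 1 * (real i - \<beta>)" unfolding p_def using assms by (intro mult_right_mono) auto
    thus ?thesis using assms by simp
  qed
  have q0: "0 \<le> q" unfolding q_def using assms by simp
  have g_gt: "g > real i - 1"
  proof (cases "\<mu> = 0")
    case True
    then show ?thesis using assms by (simp add: g_def)
  next
    case False
    hence "\<mu> > 0" using assms by simp
    hence 1: "\<mu> * (\<alpha> - (real i - 1)) > 0" using assms by simp
    have 2: "(1 - \<mu>) * (\<beta> - (real i - 1)) \<ge> 0" using assms by simp
    have "g - (real i - 1) = (1 - \<mu>) * (\<beta> - (real i - 1)) + \<mu> * (\<alpha> - (real i - 1))"
      by (simp add: g_def algebra_simps)
    then show ?thesis using 1 2 by linarith
  qed
  have gpos: "g > 0" using g_gt assms by simp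
  have a_eq: "a = g + m" by (simp add: a_def g_def algebra_simps)
  have a_gt: "a > real i - 1" using a_eq g_gt assms by simp
  have apos: "a > 0" using a_gt assms by simp
  have pq: "p + q = real i - g" by (simp add: p_def q_def g_def algebra_simps)
  have b_eq: "b = real s - p" by (simp add: b_def p_def)
  have bgt: "b > -1" using b_eq p1 by simp
  define d0 where "d0 = (\<lambda>k. of_real (Ccoef a b g k) * lam ^ k)"
  define u where "u = hilfer_u i \<alpha> \<beta> \<mu> m lam s"
  have uFP: "u = FP a d0 b" using hilfer_u_FP[OF g_def a_def b_def] gpos unfolding u_def d0_def by simp
  have ent0: "ent d0" unfolding d0_def by (rule ent_Ccoef[OF apos gpos])
  define v where "v = frac_int p u"
  define d1 where "d1 = gcoef a d0 b p"
  have bp: "b + p = real s" using b_eq by simp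
  have FI1: "frac_int_exists p u y \<and> v y = FP a d1 (real s) y" if "y > 0" for y
    using frac_FP[OF apos ent0 bgt p0 that, of u] uFP unfolding v_def d1_def bp by simp
  have ent1: "ent d1" unfolding d1_def by (rule ent_gcoef[OF apos ent0 bgt p0])
  have V: "\<forall>y>0. v y = FP a d1 (real s) y" using FI1 by blast
  note H = hderiv_FP[OF apos ent1 V]
  have Dv: "\<forall>k<i. \<forall>y>0. (hderiv k v has_vector_derivative hderiv (Suc k) v y) (at y)"
    using hderiv_FP_deriv[OF apos ent1 V] by blast
  define d2 where "d2 = dj a d1 (real s) i"
  have d20: "d2 0 = 0"
  proof -
    have "(\<Prod>l<i. (real s + real 0 * a - real l)) = 0"
      using assms(10) by (intro prod_zero) auto
    thus ?thesis unfolding d2_def dj_def by simp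
  qed
  have ent2: "ent d2" unfolding d2_def using H by blast
  define d3 where "d3 = (\<lambda>k. d2 (Suc k))"
  define e2 where "e2 = real s - real i + a"
  have Hi: "\<forall>t>0. hderiv i v t = FP a d3 e2 t"
  proof (intro allI impI)
    fix t :: real assume t: "t > 0"
    have "hderiv i v t = FP a d2 (real s - real i) t" unfolding d2_def using H t by blast
    also have "\<dots> = FP a d3 e2 t" unfolding d3_def e2_def by (rule FP_shift[OF ent2 d20 t])
    finally show "hderiv i v t = FP a d3 e2 t" .
  qed
  have ent3: "ent d3" unfolding d3_def by (rule ent_shift[OF ent2])
  have e2gt: "e2 > -1" unfolding e2_def using a_gt by simp
  have FI2: "frac_int_exists q (hderiv i v) y \<and> frac_int q (hderiv i v) y = FP a (gcoef a d3 e2 q) (e2 + q) y"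
    if "y > 0" for y
    by (rule frac_FP[OF apos ent3 e2gt q0 that Hi])
  have coef: "gcoef a d3 e2 q = (\<lambda>k. lam * d0 k)"
  proof
    fix k
    define X where "X = real s + real (Suc k) * a"
    define G1 where "G1 = real k * a + a + b - g + 1"
    define B1 where "B1 = real k * a + a + b + 1"
    define P where "P = (\<Prod>l<i. (X - real l))"
    have ka: "real k * a \<ge> 0" using apos by simp
    have G1pos: "G1 > 0" unfolding G1_def using a_eq bgt assms ka by simp
    have B1pos: "B1 > 0" unfolding B1_def using bgt apos ka by linarith
    have Xi: "X - real i + 1 > 0" unfolding X_def using a_gt ka by (simp add: algebra_simps)
    have X1: "X + 1 > 0" using Xi by simp
    have PG: "P * Gamma (X - real i + 1) = Gamma (X + 1)" unfolding P_def by (rule Gamma_prod_shift[OF Xi])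
    have e1: "b + real (Suc k) * a + 1 = B1" unfolding B1_def by (simp add: algebra_simps)
    have e2': "b + real (Suc k) * a + p + 1 = X + 1" unfolding X_def using bp by (simp add: algebra_simps)
    have e3: "e2 + real k * a + 1 = X - real i + 1" unfolding X_def e2_def by (simp add: algebra_simps)
    have e4: "e2 + real k * a + q + 1 = G1" unfolding G1_def e2_def using pq b_eq by (simp add: algebra_simps)
    have e5: "real s + real (Suc k) * a = X" unfolding X_def ..
    have CS: "Ccoef a b g (Suc k) = Ccoef a b g k * (Gamma G1 / Gamma B1)"
      unfolding Ccoef_def G1_def B1_def by simp
    have real_id: "Ccoef a b g (Suc k) * (Gamma B1 / Gamma (X + 1)) * P * (Gamma (X - real i + 1) / Gamma G1)
        = Ccoef a b g k"
    proof -
      have "Ccoef a b g (Suc k) * (Gamma B1 / Gamma (X + 1)) * P * (Gamma (X - real i + 1) / Gamma G1)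
          = Ccoef a b g k * (Gamma G1 / Gamma B1) * (Gamma B1 / Gamma (X + 1)) * (P * Gamma (X - real i + 1)) / Gamma G1"
        unfolding CS by simp
      also have "\<dots> = Ccoef a b g k"
        unfolding PG using Gamma_real_pos[OF G1pos] Gamma_real_pos[OF B1pos] Gamma_real_pos[OF X1]
        by (simp add: field_simps)
      finally show ?thesis .
    qed
    have "gcoef a d3 e2 q k = of_real (Ccoef a b g (Suc k) * (Gamma (b + real (Suc k) * a + 1) / Gamma (b + real (Suc k) * a + p + 1))
        * (\<Prod>l<i. (real s + real (Suc k) * a - real l)) * (Gamma (e2 + real k * a + 1) / Gamma (e2 + real k * a + q + 1))) * lam ^ Suc k"
      unfolding gcoef_def d3_def d2_def dj_def d1_def d0_def by (simp add: mult_ac)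
    also have "\<dots> = of_real (Ccoef a b g (Suc k) * (Gamma B1 / Gamma (X + 1)) * P * (Gamma (X - real i + 1) / Gamma G1)) * lam ^ Suc k"
      unfolding e1 e2' e3 e4 e5 P_def ..
    also have "\<dots> = lam * d0 k" unfolding real_id d0_def by (simp add: mult_ac)
    finally show "gcoef a d3 e2 q k = lam * d0 k" .
  qed
  have ex: "e2 + q = b + m" unfolding e2_def using pq b_eq a_eq by (simp add: algebra_simps)
  have final: "frac_int q (hderiv i v) y = lam * of_real (y powr m) * u y" if "y > 0" for y
  proof -
    have "frac_int q (hderiv i v) y = FP a (\<lambda>k. lam * d0 k) (b + m) y" using FI2[OF that] coef ex by simp
    also have "\<dots> = lam * FP a d0 (b + m) y" by (rule FP_cmult[OF ent0])
    also have "\<dots> = lam * of_real (y powr m) * u y"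
      unfolding uFP FP_def using that by (simp add: powr_add mult_ac)
    finally show ?thesis .
  qed
  show ?thesis
    unfolding hilfer_solution_def Let_def p_def[symmetric] q_def[symmetric] u_def[symmetric] v_def[symmetric]
    using FI1 Dv FI2 final by blast
qed


theorem mainTheorem1:
  fixes i :: nat and \<alpha> \<beta> \<mu> m :: real and lam :: complex
  assumes "i \<ge> 1"
    and "real i - 1 < \<alpha>" "\<alpha> < real i"
    and "real i - 1 < \<beta>" "\<beta> < real i"
    and "0 \<le> \<mu>" "\<mu> \<le> 1"
    and "0 \<le> m" "m + \<mu> * (\<alpha> - \<beta>) \<ge> 0"
  shows "(\<forall>s<i. hilfer_solution i \<alpha> \<beta> \<mu> m lam (hilfer_u i \<alpha> \<beta> \<mu> m lam s)) \<and>
         (\<forall>c :: nat \<Rightarrow> complex.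
            (\<forall>y>0. (\<Sum>s<i. c s * hilfer_u i \<alpha> \<beta> \<mu> m lam s y) = 0) \<longrightarrow> (\<forall>s<i. c s = 0))"
proof (intro conjI allI impI)
  fix s assume "s < i"
  then show "hilfer_solution i \<alpha> \<beta> \<mu> m lam (hilfer_u i \<alpha> \<beta> \<mu> m lam s)"
    by (rule solution_part[OF assms])
next
  fix c :: "nat \<Rightarrow> complex" and s0 :: nat
  assume H: "\<forall>y>0. (\<Sum>s<i. c s * hilfer_u i \<alpha> \<beta> \<mu> m lam s y) = 0" and s0: "s0 < i"
  define p where "p = (1 - \<mu>) * (real i - \<beta>)"
  define g where "g = \<beta> + \<mu> * (\<alpha> - \<beta>)"
  define a where "a = m + \<alpha> * \<mu> + \<beta> * (1 - \<mu>)"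
  define D where "D = (\<lambda>s k. of_real (Ccoef a (real s - (1 - \<mu>) * (real i - \<beta>)) g k) * lam ^ k)"
  have g_gt: "g > real i - 1"
  proof (cases "\<mu> = 0")
    case True
    then show ?thesis using assms by (simp add: g_def)
  next
    case False
    hence "\<mu> > 0" using assms by simp
    hence 1: "\<mu> * (\<alpha> - (real i - 1)) > 0" using assms by simp
    have 2: "(1 - \<mu>) * (\<beta> - (real i - 1)) \<ge> 0" using assms by simp
    have "g - (real i - 1) = (1 - \<mu>) * (\<beta> - (real i - 1)) + \<mu> * (\<alpha> - (real i - 1))"
      by (simp add: g_def algebra_simps)
    then show ?thesis using 1 2 by linarith
  qed
  have gpos: "g > 0" using g_gt assms by simp
  have a_eq: "a = g + m" by (simp add: a_def g_def algebra_simps)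
  have apos: "a > 0" using a_eq gpos assms by simp
  have U: "hilfer_u i \<alpha> \<beta> \<mu> m lam s = FP a (D s) (real s - p)" for s
    unfolding D_def p_def
    by (rule hilfer_u_FP[OF g_def a_def refl]) (use gpos in simp)
  have "\<forall>s<i. c s = 0"
  proof (rule lin_indep[where a=a and i=i and D=D and p=p and c=c])
    show "0 < a" by (rule apos)
    show "ent (D s)" if "s < i" for s unfolding D_def by (rule ent_Ccoef[OF apos gpos])
    show "D s 0 = 1" if "s < i" for s unfolding D_def Ccoef_def by simp
    show "(\<Sum>s<i. c s * FP a (D s) (real s - p) y) = 0" if "y > 0" for y
      using H that unfolding U by blast
  qed
  then show "c s0 = 0" using s0 by blast
qed

end
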